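(* Let $\kappa=4$ and let $Q=U\operatorname{diag}(0,\lambda_2,\lambda_3,\lambda_4)U^{-1}$ be a GTR rate matrix with stationary distribution $\boldsymbol\pi$, eigenvalues $0>\lambda_2\ge\lambda_3\ge\lambda_4$ and $U$ as in the context. (A) If $\boldsymbol\pi=(1/4,1/4,1/4,1/4)$ and $U=\begin{pmatrix}1&c&b&1\\1&-c&-b&1\\1&-b&c&-1\\1&b&-c&-1\end{pmatrix}$ with $b,c\ge0$, $b^2+c^2=2$, then $\lambda_4>\lambda_2+\lambda_3$ if $bc\neq0$, and $\lambda_4>2\lambda_2$ if $bc=0$. (B) If $\boldsymbol\pi=(1/8,1/8,1/4,1/2)$ and $U=\begin{pmatrix}1&2&\sqrt2&1\\1&-2&\sqrt2&1\\1&0&-\sqrt2&1\\1&0&0&-1\end{pmatrix}$, then $\lambda_4>2\lambda_2$.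
   Context: A GTR rate matrix $Q$ for stationary distribution $\boldsymbol\pi$ (positive entries summing to $1$) is a $4\times4$ real matrix with strictly positive off-diagonal entries, zero row sums, and $\operatorname{diag}(\boldsymbol\pi)Q$ symmetric. $U$ is real with $UU^T=\operatorname{diag}(\boldsymbol\pi)^{-1}$ and first column $\mathbf 1$, and $Q=U\operatorname{diag}(0,\lambda_2,\lambda_3,\lambda_4)U^{-1}$. *)

theory Defs
  imports "HOL-Analysis.Analysis"
begin

text \<open>4x4 real matrices are rendered as real^4^4; vectors built with the library's
  vector [.,.,.,.] (entry k of the list is component k, k = 1..4 in type 4, the
  fourth being 4 = 0). Matrices are built row by row.\<close>

definition diag_mat :: "real^'n \<Rightarrow> real^'n^'n" where
  "diag_mat d = (\<chi> i j. if i = j then d $ i else 0)"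

definition gtr_rate_matrix :: "real^4 \<Rightarrow> real^4^4 \<Rightarrow> bool" where
  "gtr_rate_matrix p Q \<longleftrightarrow>
     (\<forall>i. p $ i > 0) \<and> (\<Sum>i\<in>UNIV. p $ i) = 1 \<and>
     (\<forall>i j. i \<noteq> j \<longrightarrow> Q $ i $ j > 0) \<and>
     (\<forall>i. (\<Sum>j\<in>UNIV. Q $ i $ j) = 0) \<and>
     transpose (diag_mat p ** Q) = diag_mat p ** Q"

definition gtr_setting :: "real^4 \<Rightarrow> real^4^4 \<Rightarrow> real^4^4 \<Rightarrow> real \<Rightarrow> real \<Rightarrow> real \<Rightarrow> bool" where
  "gtr_setting p U Q l2 l3 l4 \<longleftrightarrow>
     gtr_rate_matrix p Q \<and>
     U ** transpose U = matrix_inv (diag_mat p) \<and>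
     (\<forall>i. U $ i $ 1 = 1) \<and>
     Q = U ** diag_mat (vector [0, l2, l3, l4]) ** matrix_inv U \<and>
     0 > l2 \<and> l2 \<ge> l3 \<and> l3 \<ge> l4"

end

theory Submission imports Defs begin

lemma vector_4 [simp]:
 "(vector [x,y,z,w] ::('a::zero)^4)$1 = x"
 "(vector [x,y,z,w] ::('a::zero)^4)$2 = y"
 "(vector [x,y,z,w] ::('a::zero)^4)$3 = z"
 "(vector [x,y,z,w] ::('a::zero)^4)$4 = w"
  unfolding vector_def by simp_all

lemma minv_unique:
  fixes A B :: "real^'n^'n"
  assumes "A ** B = mat 1" "B ** A = mat 1"
  shows "matrix_inv A = B"
proof -
  have "\<exists>A'. A ** A' = mat 1 \<and> A' ** A = mat 1" using assms by blast
  then have h: "A ** matrix_inv A = mat 1 \<and> matrix_inv A ** A = mat 1"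
    unfolding matrix_inv_def by (rule someI_ex)
  have "matrix_inv A = matrix_inv A ** (A ** B)" using assms by simp
  also have "\<dots> = (matrix_inv A ** A) ** B" by (simp add: matrix_mul_assoc)
  also have "\<dots> = B" using h by simp
  finally show ?thesis .
qed

lemma partA:
  fixes b c :: real
  assumes b: "b \<ge> 0" and c: "c \<ge> 0" and bc: "b\<^sup>2 + c\<^sup>2 = 2"
  and S: "gtr_setting (vector [1/4, 1/4, 1/4, 1/4])
        (vector [vector [1, c, b, 1], vector [1, -c, -b, 1],
                 vector [1, -b, c, -1], vector [1, b, -c, -1]]) Q l2 l3 l4"
  shows "(b * c \<noteq> 0 \<longrightarrow> l4 > l2 + l3) \<and> (b * c = 0 \<longrightarrow> l4 > 2 * l2)"
proof -
  define U :: "real^4^4" where "U = vector [vector [1, c, b, 1], vector [1, -c, -b, 1],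
                 vector [1, -b, c, -1], vector [1, b, -c, -1]]"
  define W :: "real^4^4" where "W = vector [vector [1/4, 1/4, 1/4, 1/4], vector [c/4, -c/4, -b/4, b/4],
                 vector [b/4, -b/4, c/4, -c/4], vector [1/4, 1/4, -1/4, -1/4]]"
  have b2: "b*b = 2 - c*c" using bc by (simp add: power2_eq_square)
  have "U ** W = mat 1"
    unfolding U_def W_def
    by (simp add: vec_eq_iff forall_4 matrix_matrix_mult_def sum_4 mat_def algebra_simps b2, simp add: field_simps)
  moreover have "W ** U = mat 1"
    unfolding U_def W_def
    using b2 by (simp add: vec_eq_iff forall_4 matrix_matrix_mult_def sum_4 mat_def, simp add: field_simps)
  ultimately have inv: "matrix_inv U = W" by (rule minv_unique)
  from S have Q: "Q = U ** diag_mat (vector [0, l2, l3, l4]) ** W" and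
    R: "gtr_rate_matrix (vector [1/4, 1/4, 1/4, 1/4]) Q"
    unfolding gtr_setting_def U_def[symmetric] inv by auto
  from S have "0 > l2" "l2 \<ge> l3" "l3 \<ge> l4" unfolding gtr_setting_def by auto
  from R have "Q$1$2 > 0" "Q$3$4 > 0" unfolding gtr_rate_matrix_def by auto
  then have h1: "l4 > c*c*l2 + b*b*l3" and h2: "l4 > b*b*l2 + c*c*l3"
    unfolding Q U_def W_def
    by (simp_all add: matrix_matrix_mult_def sum_4 diag_mat_def algebra_simps)
  have s: "2*l4 > 2*l2 + 2*l3" using h1 h2 b2 by (simp add: algebra_simps) 
  have z: "b*c = 0 \<Longrightarrow> l4 > 2*l2"
  proof -
    assume "b*c = 0"
    then have "b = 0 \<or> c = 0" by simp
    then show ?thesis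
    proof
      assume "b = 0" then have "c*c = 2" using b2 by simp
      then show ?thesis using h1 \<open>b = 0\<close> by simp
    next
      assume "c = 0" then have "b*b = 2" using b2 by simp
      then show ?thesis using h1 h2 \<open>c = 0\<close> \<open>0 > l2\<close> by simp
    qed
  qed
  show ?thesis using s z by auto
qed

lemma partB:
  assumes S: "gtr_setting (vector [1/8, 1/8, 1/4, 1/2])
        (vector [vector [1, 2, sqrt 2, 1], vector [1, -2, sqrt 2, 1],
                 vector [1, 0, - sqrt 2, 1], vector [1, 0, 0, -1]]) Q l2 l3 l4"
  shows "l4 > 2 * l2"
proof -
  define U :: "real^4^4" where "U = vector [vector [1, 2, sqrt 2, 1], vector [1, -2, sqrt 2, 1],
                 vector [1, 0, - sqrt 2, 1], vector [1, 0, 0, -1]]"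
  define W :: "real^4^4" where "W = vector [vector [1/8, 1/8, 1/4, 1/2], vector [1/4, -1/4, 0, 0],
                 vector [sqrt 2/8, sqrt 2/8, - sqrt 2/4, 0], vector [1/8, 1/8, 1/4, -1/2]]"
  have s2: "sqrt 2 * sqrt 2 = (2::real)" by simp
  have "U ** W = mat 1"
    unfolding U_def W_def
    by (simp add: vec_eq_iff forall_4 matrix_matrix_mult_def sum_4 mat_def)
  moreover have "W ** U = mat 1"
    unfolding U_def W_def
    by (simp add: vec_eq_iff forall_4 matrix_matrix_mult_def sum_4 mat_def)
  ultimately have inv: "matrix_inv U = W" by (rule minv_unique)
  from S have Q: "Q = U ** diag_mat (vector [0, l2, l3, l4]) ** W" and
    R: "gtr_rate_matrix (vector [1/8, 1/8, 1/4, 1/2]) Q"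
    unfolding gtr_setting_def U_def[symmetric] inv by auto
  from R have "Q$1$2 > 0" "Q$1$3 > 0" unfolding gtr_rate_matrix_def by auto
  then have h1: "-4*l2 + 2*l3 + l4 > 0" and h2: "l4 - 2*l3 > 0"
    unfolding Q U_def W_def
    by (simp_all add: matrix_matrix_mult_def sum_4 diag_mat_def algebra_simps)
  show ?thesis using h1 h2 by linarith
qed

theorem lemma3:
  shows
  "(\<forall>(Q::real^4^4) l2 l3 l4 (b::real) (c::real).
      b \<ge> 0 \<longrightarrow> c \<ge> 0 \<longrightarrow> b\<^sup>2 + c\<^sup>2 = 2 \<longrightarrow>
      gtr_setting (vector [1/4, 1/4, 1/4, 1/4])
        (vector [vector [1, c, b, 1], vector [1, -c, -b, 1],
                 vector [1, -b, c, -1], vector [1, b, -c, -1]]) Q l2 l3 l4 \<longrightarrow>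
      (b * c \<noteq> 0 \<longrightarrow> l4 > l2 + l3) \<and> (b * c = 0 \<longrightarrow> l4 > 2 * l2))
   \<and>
   (\<forall>(Q::real^4^4) l2 l3 l4.
      gtr_setting (vector [1/8, 1/8, 1/4, 1/2])
        (vector [vector [1, 2, sqrt 2, 1], vector [1, -2, sqrt 2, 1],
                 vector [1, 0, - sqrt 2, 1], vector [1, 0, 0, -1]]) Q l2 l3 l4 \<longrightarrow>
      l4 > 2 * l2)"
  using partA partB by blast

end
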